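(* For every $n\ge1$, $|\mathcal{T}_n^{(1,n)}|=1$, and for $n\ge2$ and $1\le p\le n-1$, $|\mathcal{T}_n^{(1,p)}|=\sum_{r=1}^{n}|\mathcal{T}_{n-1}^{(r,p)}|$.
   Context: For $m\ge1$, $1\le p\le m$: sites are $0,\dots,m+1$; a configuration in $\mathcal{S}(m,p)$ places $m+1$ distinct chips labeled $1,\dots,m+1$ with sites $0,m+1$ empty, one chip at each site of $\{1,\dots,m\}\setminus\{p\}$ and two chips at site $p$. Toppling: while some site holds at least two chips, choose such a site $i$ and two chips $\alpha<\beta$ there and move $\alpha$ to $i-1$, $\beta$ to $i+1$; it is known this terminates with at most one chip per site and the final configuration is independent of the choices. For $\pi\in S_m$ and $r\in[m+1]$, $\pi^{(r,p)}$ places at site $i$ ($1\le i\le m$) chip $\pi_i$ if $\pi_i<r$ and $\pi_i+1$ otherwise, plus chip $r$ at site $p$. $\mathcal{T}_m^{(r,p)}$ is the set of $\pi\in S_m$ such that the final configuration of $\pi^{(r,p)}$, read left to right, is $1,2,\dots,m+1$. *)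

theory Defs
  imports "HOL-Library.Multiset" "HOL-Combinatorics.Permutations"
begin

type_synonym config = "int \<Rightarrow> nat multiset"

definition topple_step :: "config \<Rightarrow> config \<Rightarrow> bool" where
  "topple_step c c' \<longleftrightarrow> (\<exists>i a b. a < b \<and> {#a, b#} \<subseteq># c i \<and>
     c' = c(i := c i - {#a, b#}, i - 1 := c (i - 1) + {#a#}, i + 1 := c (i + 1) + {#b#}))"

definition stable :: "config \<Rightarrow> bool" where
  "stable c \<longleftrightarrow> (\<forall>i. size (c i) \<le> 1)"

text \<open>The final configuration (known to exist and to be independent of choices).\<close>
definition final_config :: "config \<Rightarrow> config" where
  "final_config c = (THE c'. topple_step\<^sup>*\<^sup>* c c' \<and> stable c')"

definition read_config :: "config \<Rightarrow> nat list" where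
  "read_config c = concat (map (\<lambda>i. sorted_list_of_multiset (c i))
                              (sorted_list_of_set {i. c i \<noteq> {#}}))"

definition init_config :: "nat \<Rightarrow> nat \<Rightarrow> nat \<Rightarrow> (nat \<Rightarrow> nat) \<Rightarrow> config" where
  "init_config m r p \<pi> = (\<lambda>i::int.
     (if 1 \<le> i \<and> i \<le> int m
      then {# (if \<pi> (nat i) < r then \<pi> (nat i) else \<pi> (nat i) + 1) #} else {#})
     + (if i = int p then {#r#} else {#}))"

definition Tset :: "nat \<Rightarrow> nat \<Rightarrow> nat \<Rightarrow> (nat \<Rightarrow> nat) set" where
  "Tset m r p = {\<pi>. \<pi> permutes {1..m} \<and>
      read_config (final_config (init_config m r p \<pi>)) = [1..<m + 2]}"

end

theory Submission
  imports Defs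
begin


definition upd :: "config \<Rightarrow> int \<Rightarrow> nat \<Rightarrow> nat \<Rightarrow> config" where
  "upd c i a b = c(i := c i - {#a, b#}, i - 1 := c (i - 1) + {#a#}, i + 1 := c (i + 1) + {#b#})"

lemma topple_step_iff:
  "topple_step c c' \<longleftrightarrow> (\<exists>i a b. a < b \<and> {#a, b#} \<subseteq># c i \<and> c' = upd c i a b)"
  unfolding topple_step_def upd_def by blast

definition Pf :: "int \<Rightarrow> config \<Rightarrow> int \<Rightarrow> int" where
  "Pf lo c j = (\<Sum>k\<in>{lo..j}. int (size (c k)) - 1)"

definition Dis :: "config \<Rightarrow> bool" where
  "Dis c \<longleftrightarrow> (\<forall>i x. count (c i) x \<le> 1) \<and> (\<forall>i j x. 0 < count (c i) x \<longrightarrow> 0 < count (c j) x \<longrightarrow> i = j)"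

definition Inv :: "int \<Rightarrow> int \<Rightarrow> config \<Rightarrow> bool" where
  "Inv lo hi c \<longleftrightarrow> (\<forall>i. (i < lo \<or> hi < i) \<longrightarrow> c i = {#}) \<and>
     (\<forall>j. lo \<le> j \<and> j \<le> hi \<longrightarrow> Pf lo c j \<in> {-1, 0}) \<and> Pf lo c hi = -1 \<and> Dis c"

lemma Pf_below: "j < lo \<Longrightarrow> Pf lo c j = 0"
  unfolding Pf_def by simp

lemma Pf_split: "lo \<le> j \<Longrightarrow> Pf lo c j = Pf lo c (j - 1) + int (size (c j)) - 1"
proof -
  assume "lo \<le> j"
  then have "{lo..j} = insert j {lo..j-1}" by auto
  then show ?thesis unfolding Pf_def by simp
qed

lemma Inv_two:
  assumes "Inv lo hi c" "2 \<le> size (c i)"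
  shows "size (c i) = 2 \<and> lo < i \<and> i < hi \<and> Pf lo c (i - 1) = -1 \<and> Pf lo c i = 0"
proof -
  have r: "lo \<le> i \<and> i \<le> hi"
  proof (rule ccontr)
    assume "\<not> (lo \<le> i \<and> i \<le> hi)"
    then have "c i = {#}" using assms(1) unfolding Inv_def by auto
    then show False using assms(2) by simp
  qed
  have P: "\<forall>j. lo \<le> j \<and> j \<le> hi \<longrightarrow> Pf lo c j \<in> {-1, 0}" "Pf lo c hi = -1"
    using assms(1) unfolding Inv_def by auto
  have s: "Pf lo c i = Pf lo c (i - 1) + int (size (c i)) - 1" using Pf_split r by blast
  have lt: "lo < i"
  proof (rule ccontr)
    assume "\<not> lo < i"
    then have "i = lo" using r by simp
    then have "Pf lo c (i - 1) = 0" by (simp add: Pf_below)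
    then show False using s P r assms(2) by force
  qed
  have "Pf lo c (i - 1) \<in> {-1, 0}" using P lt r by auto
  moreover have "Pf lo c i \<in> {-1, 0}" using P r by auto
  ultimately have A: "size (c i) = 2 \<and> Pf lo c (i - 1) = -1 \<and> Pf lo c i = 0"
    using s assms(2) by auto
  then have "i \<noteq> hi" using P by auto
  then show ?thesis using A lt r by auto
qed

lemma size_upd:
  assumes "{#a, b#} \<subseteq># c i"
  shows "int (size (upd c i a b k)) = int (size (c k)) + (if k = i - 1 then 1 else 0)
           + (if k = i + 1 then 1 else 0) - (if k = i then 2 else 0)"
proof -
  have "size (c i) \<ge> 2" using size_mset_mono[OF assms] by simp
  then show ?thesis using assms unfolding upd_def
    by (auto simp: size_Diff_submset)
qed

lemma Pf_upd:
  assumes "{#a, b#} \<subseteq># c i" "lo < i"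
  shows "Pf lo (upd c i a b) j = Pf lo c j + (if j = i - 1 then 1 else 0) - (if j = i then 1 else 0)"
proof -
  have "Pf lo (upd c i a b) j = (\<Sum>k\<in>{lo..j}. (int (size (c k)) - 1) + (if k = i - 1 then 1 else 0)
           + (if k = i + 1 then 1 else 0) - (if k = i then 2 else 0))"
    unfolding Pf_def using size_upd[of a b c i, OF assms(1)] by (intro sum.cong) (auto simp: algebra_simps)
  also have "\<dots> = Pf lo c j + (\<Sum>k\<in>{lo..j}. (if k = i - 1 then 1 else 0))
        + (\<Sum>k\<in>{lo..j}. (if k = i + 1 then 1 else 0)) - (\<Sum>k\<in>{lo..j}. (if k = i then 2 else 0))"
    unfolding Pf_def by (simp add: sum.distrib sum_subtractf)
  also have "\<dots> = Pf lo c j + (if i - 1 \<in> {lo..j} then 1 else 0) + (if i + 1 \<in> {lo..j} then 1 else 0)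
        - (if i \<in> {lo..j} then 2 else 0)"
    by (simp add: sum.delta')
  also have "\<dots> = Pf lo c j + (if j = i - 1 then 1 else 0) - (if j = i then 1 else 0)"
    using assms(2) by auto
  finally show ?thesis .
qed

lemma count_upd:
  assumes "Dis c" "a < b" "{#a, b#} \<subseteq># c i"
  shows "count (upd c i a b k) x = (if x = a then (if k = i - 1 then 1 else 0)
          else if x = b then (if k = i + 1 then 1 else 0) else count (c k) x)"
proof -
  have ca: "count (c i) a = 1" "count (c i) b = 1"
  proof -
    have "count {#a, b#} a \<le> count (c i) a" "count {#a, b#} b \<le> count (c i) b"
      using mset_subset_eq_count[OF assms(3)] by blast+
    then show "count (c i) a = 1" "count (c i) b = 1" using assms(1,2) unfolding Dis_def
      by (auto intro: le_antisym)
  qed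
  have oth: "count (c k) a = 0" "count (c k) b = 0" if "k \<noteq> i" for k
    using assms(1) ca that unfolding Dis_def by (metis neq0_conv zero_less_one)+
  show ?thesis
    using assms(2) ca oth unfolding upd_def
    by (auto simp: oth)
qed

lemma Dis_upd:
  assumes "Dis c" "a < b" "{#a, b#} \<subseteq># c i"
  shows "Dis (upd c i a b)"
  unfolding Dis_def
proof (intro conjI allI impI)
  fix k x show "count (upd c i a b k) x \<le> 1"
    using assms(1) unfolding count_upd[OF assms] Dis_def by auto
next
  fix k j x assume "0 < count (upd c i a b k) x" "0 < count (upd c i a b j) x"
  then show "k = j"
    using assms(1) unfolding count_upd[OF assms] Dis_def by (auto split: if_splits)
qed

lemma step_info:
  assumes "Inv lo hi c" "topple_step c c'"
  obtains i a b where "a < b" "{#a, b#} \<subseteq># c i" "c' = upd c i a b" "c i = {#a, b#}"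
    "lo < i" "i < hi" "Pf lo c (i - 1) = -1" "Pf lo c i = 0"
proof -
  obtain i a b where h: "a < b" "{#a, b#} \<subseteq># c i" "c' = upd c i a b"
    using assms(2) unfolding topple_step_iff by blast
  have sz: "size (c i) \<ge> 2" using size_mset_mono[OF h(2)] by simp
  note I2 = Inv_two[OF assms(1) sz]
  have "c i = {#a, b#}"
    using h(2) I2 by (metis mset_subset_eq_insertD size_add_mset size_empty subset_mset.antisym
       subset_mset.le_less size_mset_mono add_mset_subseteq_single_iff leD less_irrefl mset_subset_size
       nat_neq_iff numeral_2_eq_2 One_nat_def add_0 Suc_eq_plus1)
  then show ?thesis using that h I2 by blast
qed

lemma Inv_step:
  assumes "Inv lo hi c" "topple_step c c'"
  shows "Inv lo hi c'"
proof -
  obtain i a b where h: "a < b" "{#a, b#} \<subseteq># c i" "c' = upd c i a b" "c i = {#a, b#}"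
    "lo < i" "i < hi" "Pf lo c (i - 1) = -1" "Pf lo c i = 0"
    using step_info[OF assms] by blast
  have A: "\<forall>k. (k < lo \<or> hi < k) \<longrightarrow> c k = {#}" "\<forall>j. lo \<le> j \<and> j \<le> hi \<longrightarrow> Pf lo c j \<in> {-1, 0}"
     "Pf lo c hi = -1" "Dis c" using assms(1) unfolding Inv_def by auto
  have 1: "\<forall>k. (k < lo \<or> hi < k) \<longrightarrow> c' k = {#}"
    using A(1) h unfolding upd_def by auto
  have 2: "\<forall>j. lo \<le> j \<and> j \<le> hi \<longrightarrow> Pf lo c' j \<in> {-1, 0}"
    using A(2) h Pf_upd[of a b c i lo, OF h(2) h(5)] by auto
  have 3: "Pf lo c' hi = -1" using A(3) h Pf_upd[of a b c i lo, OF h(2) h(5)] by auto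
  have 4: "Dis c'" using Dis_upd[OF A(4) h(1) h(2)] h(3) by simp
  show ?thesis using 1 2 3 4 unfolding Inv_def by blast
qed

lemma Inv_steps:
  assumes "topple_step\<^sup>*\<^sup>* c c'" "Inv lo hi c"
  shows "Inv lo hi c'"
  using assms by (induction rule: rtranclp_induct) (auto intro: Inv_step)

definition Zs :: "int \<Rightarrow> int \<Rightarrow> config \<Rightarrow> int set" where
  "Zs lo hi c = {j \<in> {lo..hi}. Pf lo c j = 0}"

definition mu :: "int \<Rightarrow> int \<Rightarrow> config \<Rightarrow> nat" where
  "mu lo hi c = (\<Sum>j\<in>Zs lo hi c. nat (j - lo))"

lemma mu_step:
  assumes "Inv lo hi c" "topple_step c c'"
  shows "mu lo hi c' < mu lo hi c"
proof -
  obtain i a b where h: "a < b" "{#a, b#} \<subseteq># c i" "c' = upd c i a b" "c i = {#a, b#}"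
    "lo < i" "i < hi" "Pf lo c (i - 1) = -1" "Pf lo c i = 0"
    using step_info[OF assms] by blast
  have Z: "Zs lo hi c' = insert (i - 1) (Zs lo hi c - {i})"
    using h Pf_upd[of a b c i lo, OF h(2) h(5)] unfolding Zs_def by auto
  have iZ: "i \<in> Zs lo hi c" "i - 1 \<notin> Zs lo hi c" using h unfolding Zs_def by auto
  have fin: "finite (Zs lo hi c)" unfolding Zs_def by (rule finite_subset[of _ "{lo..hi}"]) auto
  have "mu lo hi c' = nat (i - 1 - lo) + (\<Sum>j\<in>Zs lo hi c - {i}. nat (j - lo))"
    unfolding mu_def Z using fin iZ by (subst sum.insert) auto
  moreover have "mu lo hi c = nat (i - lo) + (\<Sum>j\<in>Zs lo hi c - {i}. nat (j - lo))"
    unfolding mu_def using fin iZ by (simp add: sum.remove)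
  ultimately show ?thesis using h(5) by simp
qed

lemma stable_no_step: "stable c \<Longrightarrow> \<not> topple_step c c'"
  unfolding stable_def topple_step_iff
  by (metis numeral_le_one_iff semiring_norm(69) size_add_mset size_mset_mono size_single
      Suc_1 not_less_eq_eq)

lemma size_two: "size M = 2 \<Longrightarrow> \<exists>x y. M = {#x, y#}"
proof -
  assume "size M = 2"
  then obtain x M' where "M = add_mset x M'" by (metis size_eq_Suc_imp_eq_union Suc_1)
  then have "size M' = 1" using \<open>size M = 2\<close> by simp
  then obtain y where "M' = {#y#}" using size_1_singleton_mset by blast
  then show ?thesis using \<open>M = add_mset x M'\<close> by blast
qed

lemma exists_final:
  assumes "Inv lo hi c"
  shows "\<exists>s. topple_step\<^sup>*\<^sup>* c s \<and> stable s"
  using assms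
proof (induction "mu lo hi c" arbitrary: c rule: less_induct)
  case less
  show ?case
  proof (cases "stable c")
    case True then show ?thesis by blast
  next
    case False
    then obtain i where "\<not> size (c i) \<le> 1" unfolding stable_def by blast
    then have si: "size (c i) \<ge> 2" by simp
    note I2 = Inv_two[OF less.prems si]
    obtain x y where xy: "c i = {#x, y#}"
      using I2 size_two by blast
    have dis: "Dis c" using less.prems unfolding Inv_def by auto
    have "x \<noteq> y" using dis xy unfolding Dis_def by (metis count_add_mset count_single
        Suc_n_not_le_n add_mset_commute  one_le_numeral)
    define a where "a = min x y"
    define b where "b = max x y"
    have ab: "a < b" "c i = {#a, b#}" using \<open>x \<noteq> y\<close> xy unfolding a_def b_def
      by (auto simp: min_def max_def add_mset_commute)
    have st: "topple_step c (upd c i a b)" unfolding topple_step_iff using ab by (metis subset_mset.order_refl)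
    have "mu lo hi (upd c i a b) < mu lo hi c" using mu_step[OF less.prems st] .
    moreover have "Inv lo hi (upd c i a b)" using Inv_step[OF less.prems st] .
    ultimately obtain s where "topple_step\<^sup>*\<^sup>* (upd c i a b) s" "stable s"
      using less.hyps by blast
    then show ?thesis using st by (meson converse_rtranclp_into_rtranclp)
  qed
qed

lemma upd_comm:
  assumes "j \<noteq> i" "j \<noteq> i + 1" "j \<noteq> i - 1"
  shows "upd (upd c i a b) j a' b' = upd (upd c j a' b') i a b"
proof
  fix k
  show "upd (upd c i a b) j a' b' k = upd (upd c j a' b') i a b k"
    using assms unfolding upd_def by (auto simp: fun_upd_apply add_ac)
qed

lemma upd_other: "k \<noteq> i \<Longrightarrow> k \<noteq> i + 1 \<Longrightarrow> k \<noteq> i - 1 \<Longrightarrow> upd c i a b k = c k"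
  unfolding upd_def by auto

lemma diamond:
  assumes "Inv lo hi c" "topple_step c c1" "topple_step c c2" "c1 \<noteq> c2"
  shows "\<exists>d. topple_step c1 d \<and> topple_step c2 d"
proof -
  obtain i a b where h: "a < b" "{#a, b#} \<subseteq># c i" "c1 = upd c i a b" "c i = {#a, b#}"
    "lo < i" "i < hi" "Pf lo c (i - 1) = -1" "Pf lo c i = 0"
    using step_info[OF assms(1,2)] by blast
  obtain j a' b' where g: "a' < b'" "{#a', b'#} \<subseteq># c j" "c2 = upd c j a' b'" "c j = {#a', b'#}"
    "lo < j" "j < hi" "Pf lo c (j - 1) = -1" "Pf lo c j = 0"
    using step_info[OF assms(1,3)] by blast
  have "i \<noteq> j"
  proof
    assume "i = j"
    then have "{#a, b#} = {#a', b'#}" using h g by simp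
    then have "a = a' \<and> b = b'" using h(1) g(1)
      by (metis (no_types, opaque_lifting) add_eq_conv_ex add_mset_eq_single order_less_imp_not_less)
    then show False using assms(4) h g \<open>i = j\<close> by simp
  qed
  moreover have "j \<noteq> i + 1" using h g by auto
  moreover have "j \<noteq> i - 1" using h g by auto
  ultimately have ne: "j \<noteq> i" "j \<noteq> i + 1" "j \<noteq> i - 1" by auto
  have "c1 j = c j" using ne h(3) upd_other by simp
  then have s1: "topple_step c1 (upd c1 j a' b')" unfolding topple_step_iff using g
    by (intro exI[of _ j] exI[of _ a'] exI[of _ b']) auto
  have "c2 i = c i" using ne g(3) upd_other by (metis add_diff_cancel diff_add_cancel)
  then have s2: "topple_step c2 (upd c2 i a b)" unfolding topple_step_iff using h
    by (intro exI[of _ i] exI[of _ a] exI[of _ b]) auto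
  have "upd c1 j a' b' = upd c2 i a b" using upd_comm[OF ne] h(3) g(3) by simp
  then show ?thesis using s1 s2 by auto
qed

lemma unique_final:
  assumes "Inv lo hi c" "topple_step\<^sup>*\<^sup>* c s1" "stable s1" "topple_step\<^sup>*\<^sup>* c s2" "stable s2"
  shows "s1 = s2"
  using assms
proof (induction "mu lo hi c" arbitrary: c s1 s2 rule: less_induct)
  case less
  show ?case
  proof (cases "c = s1")
    case True
    then have "c = s2" using less.prems(4) stable_no_step[OF less.prems(3)]
      by (metis converse_rtranclpE)
    then show ?thesis using True by simp
  next
    case False
    then obtain c1 where c1: "topple_step c c1" "topple_step\<^sup>*\<^sup>* c1 s1"
      using less.prems(2) by (metis converse_rtranclpE)
    have "c \<noteq> s2" using stable_no_step[OF less.prems(5)] c1(1) by blast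
    then obtain c2 where c2: "topple_step c c2" "topple_step\<^sup>*\<^sup>* c2 s2"
      using less.prems(4) by (metis converse_rtranclpE)
    have I1: "Inv lo hi c1" "mu lo hi c1 < mu lo hi c"
      using Inv_step[OF less.prems(1) c1(1)] mu_step[OF less.prems(1) c1(1)] by auto
    have I2: "Inv lo hi c2" "mu lo hi c2 < mu lo hi c"
      using Inv_step[OF less.prems(1) c2(1)] mu_step[OF less.prems(1) c2(1)] by auto
    show ?thesis
    proof (cases "c1 = c2")
      case True
      then show ?thesis using less.hyps[OF I1(2) I1(1) c1(2) less.prems(3)] c2(2) less.prems(5) by simp
    next
      case False
      obtain d where d: "topple_step c1 d" "topple_step c2 d"
        using diamond[OF less.prems(1) c1(1) c2(1) False] by blast
      have "Inv lo hi d" using Inv_step[OF I1(1) d(1)] .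
      then obtain s3 where s3: "topple_step\<^sup>*\<^sup>* d s3" "stable s3" using exists_final by blast
      have "topple_step\<^sup>*\<^sup>* c1 s3" "topple_step\<^sup>*\<^sup>* c2 s3" using d s3
        by (meson converse_rtranclp_into_rtranclp)+
      then have "s1 = s3" "s2 = s3"
        using less.hyps[OF I1(2) I1(1) c1(2) less.prems(3)] less.hyps[OF I2(2) I2(1) c2(2) less.prems(5)] s3
        by blast+
      then show ?thesis by simp
    qed
  qed
qed

lemma final_eq:
  assumes "Inv lo hi c" "topple_step\<^sup>*\<^sup>* c s" "stable s"
  shows "final_config c = s"
  unfolding final_config_def
  using assms unique_final[OF assms(1)] by (intro the_equality) auto

lemma final_props:
  assumes "Inv lo hi c"
  shows "topple_step\<^sup>*\<^sup>* c (final_config c) \<and> stable (final_config c)"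
  using exists_final[OF assms] final_eq[OF assms] by metis



definition lift :: "config \<Rightarrow> config" where
  "lift c = (\<lambda>i. if i = 0 then {#1#} else image_mset Suc (c (i - 1)))"

lemma lift_step:
  assumes "Inv 0 hi c" "topple_step c c'"
  shows "topple_step (lift c) (lift c')"
proof -
  obtain i a b where h: "a < b" "{#a, b#} \<subseteq># c i" "c' = upd c i a b" "c i = {#a, b#}"
    "0 < i" "i < hi"
    using step_info[OF assms] by blast
  have e: "lift c (i + 1) = {#Suc a, Suc b#}" using h unfolding lift_def by auto
  have "lift c' = upd (lift c) (i + 1) (Suc a) (Suc b)"
  proof
    fix k
    show "lift c' k = upd (lift c) (i + 1) (Suc a) (Suc b) k"
      using h e unfolding lift_def upd_def by (auto simp: fun_upd_apply add.commute)
  qed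
  then show ?thesis unfolding topple_step_iff using h e
    by (intro exI[of _ "i + 1"] exI[of _ "Suc a"] exI[of _ "Suc b"]) auto
qed

lemma lift_steps:
  assumes "topple_step\<^sup>*\<^sup>* c c'" "Inv 0 hi c"
  shows "topple_step\<^sup>*\<^sup>* (lift c) (lift c')"
  using assms
proof (induction rule: rtranclp_induct)
  case base then show ?case by simp
next
  case (step y z)
  have "Inv 0 hi y" using Inv_steps step by blast
  then show ?case using step lift_step by (meson rtranclp.rtrancl_into_rtrancl)
qed

lemma stable_lift: "stable c \<Longrightarrow> stable (lift c)"
  unfolding stable_def lift_def by auto

lemma Inv_shape:
  assumes "1 \<le> p" "p \<le> m"
    and sz: "\<And>i. size (c i) = (if 1 \<le> i \<and> i \<le> int m then 1 else 0) + (if i = int p then 1 else 0)"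
    and "Dis c"
  shows "Inv 0 (int m + 1) c"
proof -
  have P: "Pf 0 c (int t) = (if int t < int p then -1 else 0)" if "t \<le> m" for t
    using that
  proof (induction t)
    case 0
    have "Pf 0 c 0 = Pf 0 c (-1) + int (size (c 0)) - 1" using Pf_split[of 0 0 c] by simp
    then show ?case using assms(1) sz[of 0] by (simp add: Pf_below)
  next
    case (Suc t)
    have "Pf 0 c (int (Suc t)) = Pf 0 c (int t) + int (size (c (int (Suc t)))) - 1"
      using Pf_split[of 0 "int (Suc t)" c] by simp
    then show ?case using Suc sz[of "int (Suc t)"] by auto
  qed
  have Pm: "Pf 0 c (int m + 1) = -1"
    using Pf_split[of 0 "int m + 1" c] P[of m] sz[of "int m + 1"] assms(2) by simp
  have supp: "\<forall>i. (i < 0 \<or> int m + 1 < i) \<longrightarrow> c i = {#}"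
  proof (intro allI impI)
    fix i :: int assume "i < 0 \<or> int m + 1 < i"
    then have "size (c i) = 0" using sz[of i] assms(2) by auto
    then show "c i = {#}" by simp
  qed
  have "\<forall>j. 0 \<le> j \<and> j \<le> int m + 1 \<longrightarrow> Pf 0 c j \<in> {-1, 0}"
  proof (intro allI impI)
    fix j :: int assume j: "0 \<le> j \<and> j \<le> int m + 1"
    show "Pf 0 c j \<in> {-1, 0}"
    proof (cases "j = int m + 1")
      case True then show ?thesis using Pm by simp
    next
      case False
      then have "j \<le> int m" using j by simp
      then obtain t where "j = int t" "t \<le> m" using j by (metis nonneg_int_cases of_nat_le_iff)
      then show ?thesis using P by simp
    qed
  qed
  then show ?thesis unfolding Inv_def using supp Pm assms(4) by auto
qed



definition X :: "nat \<Rightarrow> nat \<Rightarrow> (nat \<Rightarrow> nat) \<Rightarrow> config" where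
  "X n p \<pi> = (\<lambda>i. (if 1 \<le> i \<and> i \<le> int p then {#\<pi> (nat i)#} else {#})
      + (if int p \<le> i \<and> i \<le> int n - 1 then {#\<pi> (nat i + 1)#} else {#}))"

lemma perm_rng: "\<pi> permutes {1..n} \<Longrightarrow> 1 \<le> u \<Longrightarrow> u \<le> n \<Longrightarrow> 1 \<le> \<pi> u \<and> \<pi> u \<le> n"
  using permutes_in_image[of \<pi> "{1..n}" u] by auto

lemma perm_inj: "\<pi> permutes {1..n} \<Longrightarrow> \<pi> u = \<pi> v \<Longrightarrow> u = v"
  using permutes_inj[of \<pi> "{1..n}"] by (auto dest: injD)

lemma perm_rng_int: "\<pi> permutes {1..n} \<Longrightarrow> 1 \<le> i \<Longrightarrow> i \<le> int n \<Longrightarrow> 1 \<le> \<pi> (nat i) \<and> \<pi> (nat i) \<le> n"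
  using perm_rng[of \<pi> n "nat i"] by auto

lemma Dis_I:
  assumes "\<And>i x. count (c i) x \<le> 1" "\<And>i j x. x \<in># c i \<Longrightarrow> x \<in># c j \<Longrightarrow> i = j"
  shows "Dis c"
  using assms unfolding Dis_def by auto

lemma init_eq:
  assumes "\<pi> permutes {1..n}"
  shows "init_config n 1 p \<pi> = (\<lambda>i. (if 1 \<le> i \<and> i \<le> int n then {#\<pi> (nat i) + 1#} else {#})
     + (if i = int p then {#1#} else {#}))"
proof
  fix i
  show "init_config n 1 p \<pi> i = (if 1 \<le> i \<and> i \<le> int n then {#\<pi> (nat i) + 1#} else {#})
     + (if i = int p then {#1#} else {#})"
  proof (cases "1 \<le> i \<and> i \<le> int n")
    case True
    then have "1 \<le> \<pi> (nat i)" using perm_rng[OF assms, of "nat i"] by auto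
    then show ?thesis unfolding init_config_def using True by auto
  next
    case False
    then show ?thesis unfolding init_config_def by auto
  qed
qed

lemma Dis_init:
  assumes "\<pi> permutes {1..n}"
  shows "Dis (init_config n 1 p \<pi>)"
proof (rule Dis_I)
  fix i x
  show "count (init_config n 1 p \<pi> i) x \<le> 1"
    unfolding init_eq[OF assms] using perm_rng[OF assms, of "p"] by auto
next
  fix i j x
  assume "x \<in># init_config n 1 p \<pi> i" "x \<in># init_config n 1 p \<pi> j"
  then show "i = j"
    unfolding init_eq[OF assms] using perm_rng_int[OF assms, of j] perm_rng_int[OF assms, of i]
    by (auto split: if_splits dest!: perm_inj[OF assms])
qed

lemma Dis_X:
  assumes "\<pi> permutes {1..n}"
  shows "Dis (X n p \<pi>)"
proof (rule Dis_I)
  fix i x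
  show "count (X n p \<pi> i) x \<le> 1"
    unfolding X_def using perm_inj[OF assms, of "nat i" "nat i + 1"] by auto
next
  fix i j x
  assume "x \<in># X n p \<pi> i" "x \<in># X n p \<pi> j"
  then show "i = j"
    unfolding X_def
    by (auto split: if_splits dest!: perm_inj[OF assms])
qed

lemma size_init:
  assumes "\<pi> permutes {1..n}"
  shows "size (init_config n 1 p \<pi> i) = (if 1 \<le> i \<and> i \<le> int n then 1 else 0) + (if i = int p then 1 else 0)"
  unfolding init_eq[OF assms] by auto

lemma size_X:
  assumes "1 \<le> p" "p \<le> n - 1"
  shows "size (X n p \<pi> i) = (if 1 \<le> i \<and> i \<le> int (n - 1) then 1 else 0) + (if i = int p then 1 else 0)"
  using assms unfolding X_def by auto

lemma Inv_init:
  assumes "\<pi> permutes {1..n}" "1 \<le> p" "p \<le> n"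
  shows "Inv 0 (int n + 1) (init_config n 1 p \<pi>)"
  using Inv_shape[OF assms(2,3) size_init[OF assms(1)] Dis_init[OF assms(1)]] .

lemma Inv_X:
  assumes "\<pi> permutes {1..n}" "1 \<le> p" "p \<le> n - 1"
  shows "Inv 0 (int n) (X n p \<pi>)"
  using Inv_shape[OF assms(2,3) size_X[OF assms(2,3)] Dis_X[OF assms(1)]] assms by simp



definition Sw :: "nat \<Rightarrow> nat \<Rightarrow> (nat \<Rightarrow> nat) \<Rightarrow> nat \<Rightarrow> config" where
  "Sw n p \<pi> k = (\<lambda>i. (if i = int p - int k then {#1#} else {#})
     + (if 1 \<le> i \<and> i \<le> int p - int k then {#\<pi> (nat i) + 1#} else {#})
     + (if int p - int k + 2 \<le> i \<and> i \<le> int p + 1 then {#\<pi> (nat i - 1) + 1#} else {#})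
     + (if int p + 1 \<le> i \<and> i \<le> int n then {#\<pi> (nat i) + 1#} else {#}))"

lemma Sw_0:
  assumes "\<pi> permutes {1..n}" "p \<le> n"
  shows "Sw n p \<pi> 0 = init_config n 1 p \<pi>"
proof
  fix i show "Sw n p \<pi> 0 i = init_config n 1 p \<pi> i"
    unfolding init_eq[OF assms(1)] Sw_def using assms(2) by (auto simp: add_ac)
qed

lemma Sw_p:
  shows "Sw n p \<pi> p = lift (X n p \<pi>)"
proof
  fix i :: int
  show "Sw n p \<pi> p i = lift (X n p \<pi>) i"
  proof (cases "i = 0")
    case True then show ?thesis unfolding Sw_def lift_def by auto
  next
    case False
    show ?thesis
    proof (cases "1 \<le> i")
      case True
      have e1: "nat (i - 1) = nat i - 1" "nat (i - 1) + 1 = nat i" using True by auto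
      show ?thesis unfolding Sw_def lift_def X_def using True e1 by auto
    next
      case False
      then show ?thesis unfolding Sw_def lift_def X_def using \<open>i \<noteq> 0\<close> by auto
    qed
  qed
qed

lemma Sw_step:
  assumes "\<pi> permutes {1..n}" "p \<le> n" "k < p"
  shows "topple_step (Sw n p \<pi> k) (Sw n p \<pi> (Suc k))"
proof -
  define j where "j = int p - int k"
  have j1: "1 \<le> j" "j \<le> int n" using assms unfolding j_def by auto
  have pr: "1 \<le> \<pi> (nat j)" using perm_rng_int[OF assms(1) j1] by auto
  have Sj: "Sw n p \<pi> k j = {#1, \<pi> (nat j) + 1#}"
    unfolding Sw_def j_def using assms by auto
  have "Sw n p \<pi> (Suc k) = upd (Sw n p \<pi> k) j 1 (\<pi> (nat j) + 1)"
  proof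
    fix i
    show "Sw n p \<pi> (Suc k) i = upd (Sw n p \<pi> k) j 1 (\<pi> (nat j) + 1) i"
    proof (cases "i = j")
      case True then show ?thesis using Sj unfolding upd_def Sw_def j_def by auto
    next
      case False
      show ?thesis
      proof (cases "i = j - 1")
        case True then show ?thesis using \<open>i \<noteq> j\<close> unfolding upd_def Sw_def j_def
          by (auto simp: add_ac)
      next
        case False
        show ?thesis
        proof (cases "i = j + 1")
          case True
          have "nat i - 1 = nat j" using True j1 by auto
          then show ?thesis using \<open>i \<noteq> j\<close> \<open>i \<noteq> j - 1\<close> True unfolding upd_def Sw_def j_def
            by (auto simp: add_ac)
        next
          case False
          then show ?thesis using \<open>i \<noteq> j\<close> \<open>i \<noteq> j - 1\<close> unfolding upd_def Sw_def j_def
            by auto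
        qed
      qed
    qed
  qed
  then show ?thesis unfolding topple_step_iff using Sj pr
    by (intro exI[of _ j] exI[of _ 1] exI[of _ "\<pi> (nat j) + 1"]) auto
qed

lemma sweep:
  assumes "\<pi> permutes {1..n}" "p \<le> n"
  shows "topple_step\<^sup>*\<^sup>* (init_config n 1 p \<pi>) (lift (X n p \<pi>))"
proof -
  have "k \<le> p \<Longrightarrow> topple_step\<^sup>*\<^sup>* (Sw n p \<pi> 0) (Sw n p \<pi> k)" for k
  proof (induction k)
    case 0 then show ?case by simp
  next
    case (Suc k)
    then show ?case using Sw_step[OF assms, of k] by (meson Suc_le_lessD less_imp_le_nat rtranclp.rtrancl_into_rtrancl)
  qed
  from this[of p] show ?thesis using Sw_0[OF assms] Sw_p by simp
qed



lemma sl_image_Suc: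
  assumes "size M \<le> 1"
  shows "sorted_list_of_multiset (image_mset Suc M) = map Suc (sorted_list_of_multiset M)"
proof (cases "M = {#}")
  case True then show ?thesis by simp
next
  case False
  then have "size M = 1" using assms by (metis le_neq_implies_less less_one size_eq_0_iff_empty)
  then obtain x where "M = {#x#}" using size_1_singleton_mset by blast
  then show ?thesis by simp
qed

lemma read_lift:
  assumes "stable Y" "finite {i. Y i \<noteq> {#}}" "\<And>i. i < 0 \<Longrightarrow> Y i = {#}"
  shows "read_config (lift Y) = 1 # map Suc (read_config Y)"
proof -
  define S where "S = {i. Y i \<noteq> {#}}"
  define L where "L = sorted_list_of_set S"
  have fin: "finite S" using assms(2) unfolding S_def .
  have setL: "set L = S" unfolding L_def using fin by simp
  have S0: "\<forall>x\<in>S. 0 \<le> x" unfolding S_def using assms(3) by (auto simp: not_le[symmetric])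
  have sL: "sorted_wrt (<) L" unfolding L_def by (rule strict_sorted_list_of_set)
  have sL1: "sorted_wrt (<) (map (\<lambda>i. i + 1) L)"
    unfolding sorted_wrt_map using sL by (rule sorted_wrt_mono_rel[rotated]) auto
  have "sorted_wrt (<) (0 # map (\<lambda>i. i + 1) L)"
    using sL1 S0 setL by auto
  then have "sorted (0 # map (\<lambda>i. i + 1) L) \<and> distinct (0 # map (\<lambda>i. i + 1) L)"
    using S0 setL by (auto simp add: strict_sorted_iff image_iff)
  then have E: "sorted_list_of_set (set (0 # map (\<lambda>i. i + 1) L)) = 0 # map (\<lambda>i. i + 1) L"
    using sorted_list_of_set.idem_if_sorted_distinct by blast
  have "{i. lift Y i \<noteq> {#}} = set (0 # map (\<lambda>i. i + 1) L)"
  proof (rule set_eqI)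
    fix i :: int
    show "i \<in> {i. lift Y i \<noteq> {#}} \<longleftrightarrow> i \<in> set (0 # map (\<lambda>i. i + 1) L)"
    proof (cases "i = 0")
      case True then show ?thesis by (simp add: lift_def)
    next
      case False
      have "lift Y i \<noteq> {#} \<longleftrightarrow> i - 1 \<in> set L" using False setL unfolding lift_def S_def by simp
      moreover have "i \<in> set (0 # map (\<lambda>i. i + 1) L) \<longleftrightarrow> i - 1 \<in> set L"
        using False by (auto simp: image_iff intro!: bexI[of _ "i - 1"])
      ultimately show ?thesis by simp
    qed
  qed
  then have E2: "sorted_list_of_set {i. lift Y i \<noteq> {#}} = 0 # map (\<lambda>i. i + 1) L" using E by simp
  have g: "sorted_list_of_multiset (lift Y (i + 1)) = map Suc (sorted_list_of_multiset (Y i))" if "i \<in> S" for i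
  proof -
    have "i + 1 \<noteq> 0" using S0 that by auto
    then show ?thesis unfolding lift_def using sl_image_Suc assms(1) unfolding stable_def by auto
  qed
  have "read_config (lift Y) = [1] @ concat (map (\<lambda>i. sorted_list_of_multiset (lift Y (i + 1))) L)"
    unfolding read_config_def E2 by (simp add: lift_def comp_def)
  also have "\<dots> = [1] @ concat (map (\<lambda>i. map Suc (sorted_list_of_multiset (Y i))) L)"
    using g setL by (metis (no_types, lifting) map_eq_conv)
  also have "\<dots> = 1 # map Suc (read_config Y)"
    unfolding read_config_def L_def S_def by (simp add: map_concat comp_def)
  finally show ?thesis .
qed

lemma upto_int: "[1..int n] = map int [1..<n+1]"
proof (induction n)
  case 0 then show ?case by simp
next
  case (Suc n)
  have "[1..int (Suc n)] = [1..int n] @ [int (Suc n)]" using upto_rec2[of 1 "int (Suc n)"] by simp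
  then show ?case using Suc by simp
qed

lemma read_Xn:
  shows "read_config (X n n \<pi>) = map \<pi> [1..<n+1]"
proof -
  have "{i. X n n \<pi> i \<noteq> {#}} = {1..int n}" unfolding X_def by auto
  then have "read_config (X n n \<pi>) = concat (map (\<lambda>i. sorted_list_of_multiset (X n n \<pi> i)) (map int [1..<n+1]))"
    unfolding read_config_def by (simp add: upto_int)
  also have "\<dots> = concat (map (\<lambda>u. [\<pi> u]) [1..<n+1])"
    unfolding X_def by (intro arg_cong[where f = concat]) (auto simp: map_eq_conv)
  also have "\<dots> = map \<pi> [1..<n+1]" by (induction n) auto
  finally show ?thesis .
qed



definition adj :: "nat \<Rightarrow> nat \<Rightarrow> nat" where "adj r v = (if v < r then v else v + 1)"
definition dadj :: "nat \<Rightarrow> nat \<Rightarrow> nat" where "dadj r v = (if v < r then v else v - 1)"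

definition ins :: "nat \<Rightarrow> nat \<Rightarrow> nat \<Rightarrow> (nat \<Rightarrow> nat) \<Rightarrow> nat \<Rightarrow> nat" where
  "ins n p r \<sigma> i = (if 1 \<le> i \<and> i \<le> p then adj r (\<sigma> i) else if i = p + 1 then r
      else if p + 2 \<le> i \<and> i \<le> n then adj r (\<sigma> (i - 1)) else i)"

definition del :: "nat \<Rightarrow> nat \<Rightarrow> nat \<Rightarrow> (nat \<Rightarrow> nat) \<Rightarrow> nat \<Rightarrow> nat" where
  "del n p r \<pi> i = (if 1 \<le> i \<and> i \<le> p then dadj r (\<pi> i)
      else if p + 1 \<le> i \<and> i \<le> n - 1 then dadj r (\<pi> (i + 1)) else i)"

lemma adj_inj: "adj r x = adj r y \<Longrightarrow> x = y" unfolding adj_def by (auto split: if_splits)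
lemma adj_ne: "adj r x \<noteq> r" unfolding adj_def by auto
lemma dadj_inj: "x \<noteq> r \<Longrightarrow> y \<noteq> r \<Longrightarrow> dadj r x = dadj r y \<Longrightarrow> x = y" unfolding dadj_def by (auto split: if_splits)
lemma adj_dadj: "x \<noteq> r \<Longrightarrow> adj r (dadj r x) = x" unfolding adj_def dadj_def by auto
lemma dadj_adj: "dadj r (adj r x) = x" unfolding adj_def dadj_def by auto

context
  fixes n p r :: nat
  assumes np: "1 \<le> p" "p \<le> n - 1" and rr: "1 \<le> r" "r \<le> n"
begin

lemma ins_perm:
  assumes "\<sigma> permutes {1..n-1}"
  shows "ins n p r \<sigma> permutes {1..n}"
proof (rule inj_imp_permutes)
  have rng: "1 \<le> \<sigma> u \<and> \<sigma> u \<le> n - 1" if "1 \<le> u" "u \<le> n - 1" for u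
    using perm_rng[OF assms that] .
  have inj: "\<sigma> u = \<sigma> v \<Longrightarrow> u = v" for u v using perm_inj[OF assms] .
  show "inj_on (ins n p r \<sigma>) {1..n}"
  proof (rule inj_onI)
    fix u v assume uv: "u \<in> {1..n}" "v \<in> {1..n}" "ins n p r \<sigma> u = ins n p r \<sigma> v"
    then show "u = v" unfolding ins_def using np
      by (auto split: if_splits dest!: adj_inj inj simp: adj_ne adj_ne[symmetric])
  qed
  show "ins n p r \<sigma> x \<in> {1..n}" if "x \<in> {1..n}" for x
  proof -
    have a: "adj r v \<in> {1..n}" if "1 \<le> v" "v \<le> n - 1" for v using that unfolding adj_def by auto
    show ?thesis using that np rr rng a unfolding ins_def by auto
  qed
  show "ins n p r \<sigma> x = x" if "x \<notin> {1..n}" for x using that np unfolding ins_def by auto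
qed simp

lemma ins_at: "ins n p r \<sigma> (p + 1) = r" unfolding ins_def using np by auto

lemma del_perm:
  assumes "\<pi> permutes {1..n}" "\<pi> (p + 1) = r"
  shows "del n p r \<pi> permutes {1..n-1}"
proof (rule inj_imp_permutes)
  have rng: "1 \<le> \<pi> u \<and> \<pi> u \<le> n" if "1 \<le> u" "u \<le> n" for u
    using perm_rng[OF assms(1) that] .
  have inj: "\<pi> u = \<pi> v \<Longrightarrow> u = v" for u v using perm_inj[OF assms(1)] .
  have ner: "\<pi> u \<noteq> r" if "u \<noteq> p + 1" for u using inj that assms(2) by metis
  show "inj_on (del n p r \<pi>) {1..n-1}"
  proof (rule inj_onI)
    fix u v assume uv: "u \<in> {1..n-1}" "v \<in> {1..n-1}" "del n p r \<pi> u = del n p r \<pi> v"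
    have dinj: "a = b" if "a \<noteq> p + 1" "b \<noteq> p + 1" "dadj r (\<pi> a) = dadj r (\<pi> b)" for a b
      using dadj_inj[OF ner[OF that(1)] ner[OF that(2)] that(3)] inj by blast
    from uv show "u = v" unfolding del_def using np
        dinj[of u v] dinj[of "Suc u" v] dinj[of u "Suc v"] dinj[of "Suc u" "Suc v"]
      by (auto split: if_splits)
  qed
  show "del n p r \<pi> x \<in> {1..n-1}" if "x \<in> {1..n-1}" for x
  proof -
    have a: "dadj r v \<in> {1..n-1}" if "1 \<le> v" "v \<le> n" "v \<noteq> r" for v using that rr unfolding dadj_def by auto
    show ?thesis using that np rr rng a ner unfolding del_def by auto
  qed
  show "del n p r \<pi> x = x" if "x \<notin> {1..n-1}" for x using that np unfolding del_def by auto
qed simp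

lemma ins_del:
  assumes "\<pi> permutes {1..n}" "\<pi> (p + 1) = r"
  shows "ins n p r (del n p r \<pi>) = \<pi>"
proof
  fix i
  have inj: "\<pi> u = \<pi> v \<Longrightarrow> u = v" for u v using perm_inj[OF assms(1)] .
  have ner: "\<pi> u \<noteq> r" if "u \<noteq> p + 1" for u using inj that assms(2) by metis
  have out: "\<pi> i = i" if "i \<notin> {1..n}" using permutes_not_in[OF assms(1) that] .
  show "ins n p r (del n p r \<pi>) i = \<pi> i"
    unfolding ins_def del_def using np ner assms(2) out by (auto simp: adj_dadj)
qed

lemma del_ins:
  assumes "\<sigma> permutes {1..n-1}"
  shows "del n p r (ins n p r \<sigma>) = \<sigma>"
proof
  fix i
  have out: "\<sigma> i = i" if "i \<notin> {1..n-1}" using permutes_not_in[OF assms that] .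
  show "del n p r (ins n p r \<sigma>) i = \<sigma> i"
    unfolding ins_def del_def using np out by (auto simp: dadj_adj)
qed

lemma X_ins:
  shows "X n p (ins n p r \<sigma>) = init_config (n - 1) r p \<sigma>"
proof
  fix i :: int
  have e: "(if \<sigma> (nat i) < r then \<sigma> (nat i) else \<sigma> (nat i) + 1) = adj r (\<sigma> (nat i))" unfolding adj_def by simp
  show "X n p (ins n p r \<sigma>) i = init_config (n - 1) r p \<sigma> i"
    unfolding X_def init_config_def e using np by (auto simp: ins_def)
qed

end



lemma upt_shift: "[1..<n+2] = 1 # map Suc [1..<n+1]"
  by (simp add: map_Suc_upt upt_conv_Cons)

lemma Inv_supp:
  assumes "Inv 0 hi c"
  shows "finite {i. c i \<noteq> {#}}" "\<And>i. i < 0 \<Longrightarrow> c i = {#}"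
proof -
  have "{i. c i \<noteq> {#}} \<subseteq> {0..hi}" using assms unfolding Inv_def by (auto simp: not_le not_less)
  then show "finite {i. c i \<noteq> {#}}" by (rule finite_subset) simp
  show "\<And>i. i < 0 \<Longrightarrow> c i = {#}" using assms unfolding Inv_def by auto
qed

lemma case_n:
  assumes "\<pi> permutes {1..n}" "1 \<le> n"
  shows "\<pi> \<in> Tset n 1 n \<longleftrightarrow> \<pi> = id"
proof -
  have st: "stable (X n n \<pi>)" unfolding stable_def X_def by auto
  have fin: "final_config (init_config n 1 n \<pi>) = lift (X n n \<pi>)"
    using final_eq[OF Inv_init[OF assms(1) assms(2) order_refl] sweep[OF assms(1) order_refl] stable_lift[OF st]] .
  have sup: "finite {i. X n n \<pi> i \<noteq> {#}}" "\<And>i. i < 0 \<Longrightarrow> X n n \<pi> i = {#}"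
  proof -
    have "{i. X n n \<pi> i \<noteq> {#}} \<subseteq> {1..int n}" unfolding X_def by auto
    then show "finite {i. X n n \<pi> i \<noteq> {#}}" by (rule finite_subset) simp
    show "\<And>i. i < 0 \<Longrightarrow> X n n \<pi> i = {#}" unfolding X_def by auto
  qed
  have rd: "read_config (final_config (init_config n 1 n \<pi>)) = 1 # map Suc (map \<pi> [1..<n+1])"
    unfolding fin using read_lift[OF st sup] read_Xn[of n \<pi>] by simp
  have "\<pi> \<in> Tset n 1 n \<longleftrightarrow> (1 # map Suc (map \<pi> [1..<n+1]) = 1 # map Suc [1..<n+1])"
    unfolding Tset_def mem_Collect_eq rd upt_shift using assms(1) by blast
  also have "\<dots> \<longleftrightarrow> map \<pi> [1..<n+1] = [1..<n+1]"
    by (simp only: list.inject inj_map_eq_map[OF inj_Suc] simp_thms)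
  also have "\<dots> \<longleftrightarrow> (\<forall>x\<in>{1..n}. \<pi> x = x)"
  proof
    assume "map \<pi> [1..<n+1] = [1..<n+1]"
    then have "map \<pi> [1..<n+1] = map id [1..<n+1]" by simp
    then show "\<forall>x\<in>{1..n}. \<pi> x = x" unfolding map_eq_conv by auto
  next
    assume "\<forall>x\<in>{1..n}. \<pi> x = x"
    then show "map \<pi> [1..<n+1] = [1..<n+1]" by (intro map_idI) auto
  qed
  also have "\<dots> \<longleftrightarrow> \<pi> = id"
    using permutes_not_in[OF assms(1)] by (auto simp: fun_eq_iff)
  finally show ?thesis .
qed

lemma part1:
  assumes "1 \<le> n"
  shows "card (Tset n 1 n) = 1"
proof -
  have "Tset n 1 n = {id}"
  proof
    show "Tset n 1 n \<subseteq> {id}" using case_n[OF _ assms] unfolding Tset_def by auto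
    show "{id} \<subseteq> Tset n 1 n" using case_n[OF permutes_id assms] by auto
  qed
  then show ?thesis by simp
qed

lemma case_p:
  assumes "\<pi> permutes {1..n}" "1 \<le> p" "p \<le> n - 1"
  shows "\<pi> \<in> Tset n 1 p \<longleftrightarrow> read_config (final_config (X n p \<pi>)) = [1..<n+1]"
proof -
  have pn: "p \<le> n" using assms by simp
  have IX: "Inv 0 (int n) (X n p \<pi>)" using Inv_X[OF assms] .
  have fX: "topple_step\<^sup>*\<^sup>* (X n p \<pi>) (final_config (X n p \<pi>))" "stable (final_config (X n p \<pi>))"
    using final_props[OF IX] by auto
  have IF: "Inv 0 (int n) (final_config (X n p \<pi>))" using Inv_steps[OF fX(1) IX] .
  have "topple_step\<^sup>*\<^sup>* (init_config n 1 p \<pi>) (lift (final_config (X n p \<pi>)))"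
    using sweep[OF assms(1) pn] lift_steps[OF fX(1) IX] by (rule rtranclp_trans)
  then have fin: "final_config (init_config n 1 p \<pi>) = lift (final_config (X n p \<pi>))"
    using final_eq[OF Inv_init[OF assms(1) assms(2) pn]] stable_lift[OF fX(2)] by blast
  have rd: "read_config (final_config (init_config n 1 p \<pi>)) = 1 # map Suc (read_config (final_config (X n p \<pi>)))"
    unfolding fin using read_lift[OF fX(2) Inv_supp[OF IF]] .
  show ?thesis unfolding Tset_def using assms(1) rd upt_shift by (simp add: inj_map_eq_map)
qed

lemma part2:
  assumes "2 \<le> n" "1 \<le> p" "p \<le> n - 1"
  shows "card (Tset n 1 p) = (\<Sum>r = 1..n. card (Tset (n - 1) r p))"
proof -
  have finT: "finite (Tset n 1 p)"
    by (rule finite_subset[of _ "{\<pi>. \<pi> permutes {1..n}}"]) (auto simp: Tset_def finite_permutations)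
  have img: "(\<lambda>\<pi>. \<pi> (p + 1)) ` Tset n 1 p \<subseteq> {1..n}"
  proof
    fix x assume "x \<in> (\<lambda>\<pi>. \<pi> (p + 1)) ` Tset n 1 p"
    then obtain \<pi> where "\<pi> permutes {1..n}" "x = \<pi> (p + 1)" unfolding Tset_def by blast
    then show "x \<in> {1..n}" using perm_rng[of \<pi> n "p + 1"] assms by auto
  qed
  have "card (Tset n 1 p) = (\<Sum>r = 1..n. card {\<pi> \<in> Tset n 1 p. \<pi> (p + 1) = r})"
    using sum.group[OF finT _ img, of "\<lambda>_. 1::nat"] by simp
  also have "\<dots> = (\<Sum>r = 1..n. card (Tset (n - 1) r p))"
  proof (rule sum.cong[OF refl])
    fix r assume r: "r \<in> {1..n}"
    then have rr: "1 \<le> r" "r \<le> n" by auto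
    have n1: "n - 1 + 2 = n + 1" using assms by simp
    have "bij_betw (ins n p r) (Tset (n - 1) r p) {\<pi> \<in> Tset n 1 p. \<pi> (p + 1) = r}"
    proof (rule bij_betw_byWitness[where f' = "del n p r"])
      show "\<forall>a\<in>Tset (n - 1) r p. del n p r (ins n p r a) = a"
        using del_ins[OF assms(2,3) rr] unfolding Tset_def by auto
      show "\<forall>a\<in>{\<pi> \<in> Tset n 1 p. \<pi> (p + 1) = r}. ins n p r (del n p r a) = a"
        using ins_del[OF assms(2,3) rr] unfolding Tset_def by auto
      show "ins n p r ` Tset (n - 1) r p \<subseteq> {\<pi> \<in> Tset n 1 p. \<pi> (p + 1) = r}"
      proof
        fix \<pi> assume "\<pi> \<in> ins n p r ` Tset (n - 1) r p"
        then obtain \<sigma> where s: "\<sigma> \<in> Tset (n - 1) r p" "\<pi> = ins n p r \<sigma>" by blast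
        have sp: "\<sigma> permutes {1..n-1}" using s(1) unfolding Tset_def by auto
        have pp: "\<pi> permutes {1..n}" using ins_perm[OF assms(2,3) rr sp] s(2) by simp
        have "read_config (final_config (init_config (n - 1) r p \<sigma>)) = [1..<n - 1 + 2]"
          using s(1) unfolding Tset_def by blast
        then have "read_config (final_config (X n p \<pi>)) = [1..<n+1]"
          using X_ins[OF assms(2,3) rr, of \<sigma>] n1 s(2) by simp
        then show "\<pi> \<in> {\<pi> \<in> Tset n 1 p. \<pi> (p + 1) = r}"
          using case_p[OF pp assms(2,3)] pp s(2) ins_at[OF assms(2,3) rr] by auto
      qed
      show "del n p r ` {\<pi> \<in> Tset n 1 p. \<pi> (p + 1) = r} \<subseteq> Tset (n - 1) r p"
      proof
        fix \<sigma> assume "\<sigma> \<in> del n p r ` {\<pi> \<in> Tset n 1 p. \<pi> (p + 1) = r}"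
        then obtain \<pi> where s: "\<pi> \<in> Tset n 1 p" "\<pi> (p + 1) = r" "\<sigma> = del n p r \<pi>" by blast
        have pp: "\<pi> permutes {1..n}" using s(1) unfolding Tset_def by auto
        have sp: "\<sigma> permutes {1..n-1}" using del_perm[OF assms(2,3) rr pp s(2)] s(3) by simp
        have "X n p \<pi> = init_config (n - 1) r p \<sigma>"
          using X_ins[OF assms(2,3) rr, of \<sigma>] ins_del[OF assms(2,3) rr pp s(2)] s(3) by simp
        have "read_config (final_config (X n p \<pi>)) = [1..<n+1]"
          using case_p[OF pp assms(2,3)] s(1) by blast
        then show "\<sigma> \<in> Tset (n - 1) r p"
          using \<open>X n p \<pi> = init_config (n - 1) r p \<sigma>\<close> sp n1 unfolding Tset_def by simp
      qed
    qed
    then have "card (Tset (n - 1) r p) = card {\<pi> \<in> Tset n 1 p. \<pi> (p + 1) = r}"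
      by (rule bij_betw_same_card)
    then show "card {\<pi> \<in> Tset n 1 p. \<pi> (p + 1) = r} = card (Tset (n - 1) r p)" by simp
  qed
  finally show ?thesis .
qed

theorem proposition4p6:
  shows "(\<forall>n::nat. n \<ge> 1 \<longrightarrow> card (Tset n 1 n) = 1) \<and>
         (\<forall>n p::nat. n \<ge> 2 \<and> 1 \<le> p \<and> p \<le> n - 1 \<longrightarrow>
            card (Tset n 1 p) = (\<Sum>r = 1..n. card (Tset (n - 1) r p)))"
proof (intro conjI allI impI)
  fix n :: nat assume "n \<ge> 1" then show "card (Tset n 1 n) = 1" by (rule part1)
next
  fix n p :: nat assume "n \<ge> 2 \<and> 1 \<le> p \<and> p \<le> n - 1"
  then show "card (Tset n 1 p) = (\<Sum>r = 1..n. card (Tset (n - 1) r p))" using part2 by blast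
qed

end
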